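(* Let $a>0$, $n\ge2$, $\lambda=\frac{\pi-2}{a(\pi-4)}$, $s=\frac{\sqrt{2\pi}}{a(\pi-4)}$, $k=\frac{2a}{\sqrt{2\pi}}$, $t=\frac{2}{\sqrt{2\pi}a}$, and let $C=(c_{ij})$ be real with $\sum_i c_{ij}=1$ for all $j$. Suppose real numbers $\rho^i_\infty,q^i_\infty,\gamma^i$ satisfy for all $i$ \[ q^i_\infty-\gamma^i+k\rho^i_\infty=-\sum_jc_{ij}\big(q^j_\infty+\gamma^j-k\rho^j_\infty\big), \] \[ \rho^i_\infty+(\lambda+s)\gamma^i+t\,q^i_\infty=\sum_jc_{ij}\big(\rho^j_\infty+(s-\lambda)\gamma^j-t\,q^j_\infty\big). \] Then $\sum_iq^i_\infty=0$ and $\sum_i\gamma^i=0$. If moreover the node is uniform ($c_{ij}=\frac1{n-1}$ for $i\neq j$, $c_{ii}=0$), then with $m=\frac{n-2}{n}$ each of the quantities \[ m\,q^i_\infty-\gamma^i+k\rho^i_\infty,\qquad \rho^i_\infty+\Big(m+\tfrac{\sqrt{2\pi}}{\pi-2}\Big)\lambda\gamma^i+t\,m\,q^i_\infty,\qquad \rho^i_\infty+\frac{m}{a}\,\frac{4+m\sqrt{2\pi}}{\sqrt{2\pi}+2m}\,q^i_\infty \] is independent of $i$.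
   Context: These equations come from integrating the kinetic coupling $f^i(0,v)=\sum_jc_{ij}f^j(0,-v)$, $v>0$, against $1$ and $v$ over half-ranges and expressing the half-moments at the node through the asymptotic states and layer amplitudes $\gamma^i$ of the half-moment half-space problems (unbounded velocities, Maxwellian $M(v)=(2\pi a^2)^{-1/2}e^{-v^2/(2a^2)}$) on each edge. *)

theory Defs
  imports Complex_Main
begin

end

theory Submission
  imports Defs "HOL-Analysis.Complex_Transcendental"
begin

lemma unif_sum:
  fixes c :: "nat \<Rightarrow> nat \<Rightarrow> real" and f :: "nat \<Rightarrow> real"
  assumes "\<forall>i<n. \<forall>j<n. c i j = (if i = j then 0 else 1 / (real n - 1))" "i < n"
  shows "(\<Sum>j<n. c i j * f j) = ((\<Sum>j<n. f j) - f i) / (real n - 1)"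
proof -
  have "(\<Sum>j<n. c i j * f j) = c i i * f i + (\<Sum>j\<in>{..<n}-{i}. c i j * f j)"
    using assms(2) by (simp add: sum.remove)
  also have "c i i = 0" using assms by simp
  also have "(\<Sum>j\<in>{..<n}-{i}. c i j * f j) = (\<Sum>j\<in>{..<n}-{i}. f j / (real n - 1))"
    using assms by (intro sum.cong) auto
  also have "\<dots> = (\<Sum>j\<in>{..<n}-{i}. f j) / (real n - 1)"
    by (simp add: sum_divide_distrib)
  also have "(\<Sum>j\<in>{..<n}-{i}. f j) = (\<Sum>j<n. f j) - f i"
    using assms(2) by (simp add: sum_diff1)
  finally show ?thesis by simp
qed

lemma alg3:
  fixes w p a m rho q gam :: real
  assumes w2: "w * w = 2 * p" and w: "w > 0" and a: "a > 0" and m: "m \<ge> 0"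
    and p2: "p - 2 \<noteq> 0" and p4: "p - 4 \<noteq> 0"
  shows "(1 + (m + w / (p - 2)) * ((p - 2) / (a * (p - 4))) * (2 * a / w)) *
      (rho + m / a * ((4 + m * w) / (w + 2 * m)) * q)
    = (rho + (m + w / (p - 2)) * ((p - 2) / (a * (p - 4))) * gam + 2 / (w * a) * m * q)
       + (m + w / (p - 2)) * ((p - 2) / (a * (p - 4))) * (m * q - gam + 2 * a / w * rho)"
    (is "?L = ?R")
proof -
  have peq: "p = w * w / 2" using w2 by simp
  have d: "w + 2 * m \<noteq> 0" using w m by linarith
  have B: "(m + w / (p - 2)) * ((p - 2) / (a * (p - 4))) = (m*(p-2)+w)/(a*(p-4))"
  proof -
    have "m + w / (p - 2) = (m*(p-2)+w)/(p-2)" using p2 by (simp add: field_simps)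
    then show ?thesis using p2 p4 a by simp
  qed
  have e: "1 + (m*(p-2)+w)/(a*(p-4)) * (2 * a / w)
     = (p - 2) * (w + 2 * m) / ((p - 4) * w)"
    using p2 p4 a w by (simp add: field_simps)
  have f: "(m*(p-2)+w)/(a*(p-4)) + 2 / (w * a) = (p-2)*(4+m*w)/(a*(p-4)*w)"
    using p2 p4 a w by (simp add: field_simps) (simp add: algebra_simps peq)
  have "?R = (1 + (m*(p-2)+w)/(a*(p-4)) * (2 * a / w)) * rho
      + m * ((m*(p-2)+w)/(a*(p-4)) + 2 / (w * a)) * q"
  proof -
    have gen: "\<And>X. (rho + X*gam + 2/(w*a)*m*q) + X*(m*q - gam + 2*a/w*rho) = (1 + X*(2*a/w))*rho + m*(X + 2/(w*a))*q"
      by (simp add: algebra_simps)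
    show ?thesis unfolding B by (rule gen)
  qed
  also have "\<dots> = (p - 2) * (w + 2 * m) / ((p - 4) * w) * rho + m * ((p-2)*(4+m*w)/(a*(p-4)*w)) * q"
    unfolding e f ..
  also have "\<dots> = ?L"
  proof -
    have k: "(p - 2) * (w + 2 * m) / ((p - 4) * w) * (m / a * ((4 + m * w) / (w + 2 * m)))
       = m * ((p-2)*(4+m*w)/(a*(p-4)*w))"
    proof -
      have "(p - 2) * (w + 2 * m) / ((p - 4) * w) * (m / a * ((4 + m * w) / (w + 2 * m)))
        = ((p - 2) * m * (4 + m * w) * (w + 2 * m)) / ((a*(p - 4) * w) * (w + 2 * m))"
        by (simp add: divide_inverse inverse_mult_distrib mult_ac)
      also have "\<dots> = ((p - 2) * m * (4 + m * w)) / (a*(p - 4) * w)"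
        using d by (rule mult_divide_mult_cancel_right)
      finally show ?thesis by (simp add: algebra_simps)
    qed
    have gen2: "\<And>D Y. D*(rho + Y*q) = D*rho + (D*Y)*q" by (simp add: algebra_simps)
    show ?thesis unfolding B e gen2 k ..
  qed
  finally show ?thesis ..
qed

lemma alg3nz:
  fixes w p a m :: real
  assumes w: "w > 0" and a: "a > 0" and m: "m \<ge> 0"
    and p2: "p - 2 \<noteq> 0" and p4: "p - 4 \<noteq> 0"
  shows "1 + (m + w / (p - 2)) * ((p - 2) / (a * (p - 4))) * (2 * a / w) \<noteq> 0"
proof -
  have d: "w + 2 * m \<noteq> 0" using w m by linarith
  have B: "(m + w / (p - 2)) * ((p - 2) / (a * (p - 4))) = (m*(p-2)+w)/(a*(p-4))"
  proof -
    have "m + w / (p - 2) = (m*(p-2)+w)/(p-2)" using p2 by (simp add: field_simps)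
    then show ?thesis using p2 p4 a by simp
  qed
  have e: "1 + (m*(p-2)+w)/(a*(p-4)) * (2 * a / w)
     = (p - 2) * (w + 2 * m) / ((p - 4) * w)"
    using p2 p4 a w by (simp add: field_simps)
  show ?thesis unfolding B e using d p2 p4 w by simp
qed

lemma colsum_swap:
  fixes c :: "nat \<Rightarrow> nat \<Rightarrow> real"
  assumes "\<forall>j<n. (\<Sum>i<n. c i j) = 1"
  shows "(\<Sum>i<n. \<Sum>j<n. c i j * f j) = (\<Sum>j<n. f j)"
proof -
  have "(\<Sum>i<n. \<Sum>j<n. c i j * f j) = (\<Sum>j<n. \<Sum>i<n. c i j * f j)"
    by (rule sum.swap)
  also have "\<dots> = (\<Sum>j<n. (\<Sum>i<n. c i j) * f j)"
    by (simp add: sum_distrib_right)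
  also have "\<dots> = (\<Sum>j<n. f j)" using assms by simp
  finally show ?thesis .
qed

theorem mainTheorem10:
  fixes a :: real and n :: nat
    and c :: "nat \<Rightarrow> nat \<Rightarrow> real"
    and rho q gam :: "nat \<Rightarrow> real"
    and lam s k t :: real
  assumes a_pos: "a > 0" and n_ge: "n \<ge> 2"
    and lam_def: "lam = (pi - 2) / (a * (pi - 4))"
    and s_def: "s = sqrt (2 * pi) / (a * (pi - 4))"
    and k_def: "k = 2 * a / sqrt (2 * pi)"
    and t_def: "t = 2 / (sqrt (2 * pi) * a)"
    and colsum: "\<forall>j<n. (\<Sum>i<n. c i j) = 1"
    and eq1: "\<forall>i<n. q i - gam i + k * rho i
               = - (\<Sum>j<n. c i j * (q j + gam j - k * rho j))"
    and eq2: "\<forall>i<n. rho i + (lam + s) * gam i + t * q i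
               = (\<Sum>j<n. c i j * (rho j + (s - lam) * gam j - t * q j))"
  shows "(\<Sum>i<n. q i) = 0 \<and> (\<Sum>i<n. gam i) = 0 \<and>
    ((\<forall>i<n. \<forall>j<n. c i j = (if i = j then 0 else 1 / (real n - 1))) \<longrightarrow>
      (let m = (real n - 2) / real n in
        \<forall>i<n. \<forall>j<n.
          m * q i - gam i + k * rho i = m * q j - gam j + k * rho j \<and>
          rho i + (m + sqrt (2 * pi) / (pi - 2)) * lam * gam i + t * m * q i
            = rho j + (m + sqrt (2 * pi) / (pi - 2)) * lam * gam j + t * m * q j \<and>
          rho i + m / a * ((4 + m * sqrt (2 * pi)) / (sqrt (2 * pi) + 2 * m)) * q i
            = rho j + m / a * ((4 + m * sqrt (2 * pi)) / (sqrt (2 * pi) + 2 * m)) * q j))"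
proof -
  define Q where "Q = (\<Sum>i<n. q i)"
  define G where "G = (\<Sum>i<n. gam i)"
  define R where "R = (\<Sum>i<n. rho i)"
  have p3: "pi > 3" using pi_gt3 .
  have p4: "pi < 4" using pi_less_4 .
  define w where "w = sqrt (2 * pi)"
  have w: "w > 0" unfolding w_def using p3 by simp
  have w2: "w * w = 2 * pi" unfolding w_def using p3 by simp
  have lam_nz: "lam \<noteq> 0" unfolding lam_def using p3 p4 a_pos by simp
  have S1: "(\<Sum>i<n. q i - gam i + k * rho i) = - (\<Sum>j<n. q j + gam j - k * rho j)"
  proof -
    have "(\<Sum>i<n. q i - gam i + k * rho i) = (\<Sum>i<n. - (\<Sum>j<n. c i j * (q j + gam j - k * rho j)))"
      using eq1 by (intro sum.cong) auto
    also have "\<dots> = - (\<Sum>i<n. \<Sum>j<n. c i j * (q j + gam j - k * rho j))"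
      by (simp add: sum_negf)
    also have "\<dots> = - (\<Sum>j<n. q j + gam j - k * rho j)" using colsum_swap[OF colsum] by simp
    finally show ?thesis .
  qed
  have S1': "Q - G + k * R = - (Q + G - k * R)"
    using S1 unfolding Q_def G_def R_def
    by (simp add: sum.distrib sum_subtractf sum_distrib_left)
  have Q0: "Q = 0" using S1' by linarith
  have S2: "(\<Sum>i<n. rho i + (lam + s) * gam i + t * q i) = (\<Sum>j<n. rho j + (s - lam) * gam j - t * q j)"
  proof -
    have "(\<Sum>i<n. rho i + (lam + s) * gam i + t * q i) = (\<Sum>i<n. (\<Sum>j<n. c i j * (rho j + (s - lam) * gam j - t * q j)))"
      using eq2 by (intro sum.cong) auto
    also have "\<dots> = (\<Sum>j<n. rho j + (s - lam) * gam j - t * q j)" using colsum_swap[OF colsum] by simp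
    finally show ?thesis .
  qed
  have S2': "R + (lam + s) * G + t * Q = R + (s - lam) * G - t * Q"
    using S2 unfolding Q_def G_def R_def
    by (simp add: sum.distrib sum_subtractf sum_distrib_left)
  have "lam * G = 0" using S2' Q0 by (simp add: algebra_simps)
  then have G0: "G = 0" using lam_nz by simp
  show ?thesis
  proof (intro conjI impI)
    show "(\<Sum>i<n. q i) = 0" using Q0 Q_def by simp
    show "(\<Sum>i<n. gam i) = 0" using G0 G_def by simp
    assume U: "\<forall>i<n. \<forall>j<n. c i j = (if i = j then 0 else 1 / (real n - 1))"
    define m where "m = (real n - 2) / real n"
    have n2: "real n \<ge> 2" using n_ge by simp
    have m0: "m \<ge> 0" unfolding m_def using n2 by simp
    have E1: "m * q i - gam i + k * rho i = k * R / real n" if i: "i < n" for i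
    proof -
      have "q i - gam i + k * rho i = - ((((\<Sum>j<n. q j + gam j - k * rho j)) - (q i + gam i - k * rho i)) / (real n - 1))"
        using eq1 i unif_sum[OF U i, of "\<lambda>j. q j + gam j - k * rho j"] by auto
      also have "(\<Sum>j<n. q j + gam j - k * rho j) = Q + G - k * R"
        unfolding Q_def G_def R_def by (simp add: sum.distrib sum_subtractf sum_distrib_left)
      finally have h: "q i - gam i + k * rho i = - (((Q + G - k * R) - (q i + gam i - k * rho i)) / (real n - 1))" .
      have h2: "(real n - 1) * (q i - gam i + k * rho i) = k * R + (q i + gam i - k * rho i)"
        using h Q0 G0 n2 by (simp add: field_simps)
      show ?thesis unfolding m_def using h2 n2 by (simp add: field_simps)
    qed
    have sl: "s = lam * w / (pi - 2)"
    proof -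
      have nz: "pi - 2 \<noteq> 0" using p3 by simp
      have "lam * w / (pi - 2) = w / (a * (pi - 4)) * ((pi - 2) / (pi - 2))"
        unfolding lam_def by (simp add: divide_inverse mult_ac)
      also have "\<dots> = s" using nz unfolding s_def w_def by simp
      finally show ?thesis by simp
    qed
    have E2: "rho i + (m + w / (pi - 2)) * lam * gam i + t * m * q i = R / real n" if i: "i < n" for i
    proof -
      have "rho i + (lam + s) * gam i + t * q i = (((\<Sum>j<n. rho j + (s - lam) * gam j - t * q j)) - (rho i + (s - lam) * gam i - t * q i)) / (real n - 1)"
        using eq2 i unif_sum[OF U i, of "\<lambda>j. rho j + (s - lam) * gam j - t * q j"] by auto
      also have "(\<Sum>j<n. rho j + (s - lam) * gam j - t * q j) = R + (s - lam) * G - t * Q"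
        unfolding Q_def G_def R_def by (simp add: sum.distrib sum_subtractf sum_distrib_left)
      finally have h: "rho i + (lam + s) * gam i + t * q i = ((R + (s - lam) * G - t * Q) - (rho i + (s - lam) * gam i - t * q i)) / (real n - 1)" .
      have h2: "(real n - 1) * (rho i + (lam + s) * gam i + t * q i) = R - (rho i + (s - lam) * gam i - t * q i)"
        using h Q0 G0 n2 by (simp add: field_simps)
      have co: "(m + w / (pi - 2)) * lam = lam + s - 2 * lam / real n"
        unfolding m_def sl using n2 p3 by (simp add: field_simps)
      have h3: "real n * rho i + (real n * lam + real n * s - 2 * lam) * gam i + (real n - 2) * t * q i = R"
        using h2 by (simp add: algebra_simps)
      have nn: "real n \<noteq> 0" using n2 by simp
      have h4: "real n * (rho i + (lam + s - 2 * lam / real n) * gam i + t * ((real n - 2) / real n) * q i) = R"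
      proof -
        have a1: "real n * (2 * lam / real n) = 2 * lam" using nn by simp
        have a2: "real n * ((real n - 2) / real n) = real n - 2" using nn by simp
        have "real n * (rho i + (lam + s - 2 * lam / real n) * gam i + t * ((real n - 2) / real n) * q i)
          = real n * rho i + (real n * lam + real n * s - real n * (2 * lam / real n)) * gam i + (real n * ((real n - 2) / real n)) * t * q i"
          by (simp add: algebra_simps)
        also have "\<dots> = R" unfolding a1 a2 by (rule h3)
        finally show ?thesis .
      qed
      have "rho i + (lam + s - 2 * lam / real n) * gam i + t * ((real n - 2) / real n) * q i = R / real n"
        using h4 nn by (simp add: eq_divide_eq mult.commute)
      then show ?thesis unfolding co unfolding m_def by (simp add: mult.assoc)
    qed
    have E3: "rho i + m / a * ((4 + m * w) / (w + 2 * m)) * q i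
       = (R / real n + (m + w / (pi - 2)) * lam * (k * R / real n))
         / (1 + (m + w / (pi - 2)) * ((pi - 2) / (a * (pi - 4))) * (2 * a / w))" if i: "i < n" for i
    proof -
      have nz: "1 + (m + w / (pi - 2)) * ((pi - 2) / (a * (pi - 4))) * (2 * a / w) \<noteq> 0"
        using alg3nz[OF w a_pos m0] p3 p4 by simp
      have "(1 + (m + w / (pi - 2)) * ((pi - 2) / (a * (pi - 4))) * (2 * a / w)) *
          (rho i + m / a * ((4 + m * w) / (w + 2 * m)) * q i)
        = (rho i + (m + w / (pi - 2)) * lam * gam i + t * m * q i)
          + (m + w / (pi - 2)) * lam * (m * q i - gam i + k * rho i)"
        using alg3[OF w2 w a_pos m0, of "rho i" "q i" "gam i"] p3 p4
        unfolding lam_def k_def t_def w_def by (simp add: mult.assoc)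
      also have "\<dots> = R / real n + (m + w / (pi - 2)) * lam * (k * R / real n)"
        using E1[OF i] E2[OF i] by simp
      finally show ?thesis using nz by (simp add: field_simps)
    qed
    show "let m = (real n - 2) / real n in
        \<forall>i<n. \<forall>j<n.
          m * q i - gam i + k * rho i = m * q j - gam j + k * rho j \<and>
          rho i + (m + sqrt (2 * pi) / (pi - 2)) * lam * gam i + t * m * q i
            = rho j + (m + sqrt (2 * pi) / (pi - 2)) * lam * gam j + t * m * q j \<and>
          rho i + m / a * ((4 + m * sqrt (2 * pi)) / (sqrt (2 * pi) + 2 * m)) * q i
            = rho j + m / a * ((4 + m * sqrt (2 * pi)) / (sqrt (2 * pi) + 2 * m)) * q j"
      unfolding Let_def m_def[symmetric] w_def[symmetric]
      using E1 E2 E3 by simp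
  qed
qed

end
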